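(* Let $R$ be a supertropical semiring such that $eR$ is a semifield with $\mathcal G\neq\{e\}$, let $(q,b)$ be a quadratic pair on an $R$-module $V$, and let $x,y,w\in V$ be anisotropic vectors (so that $x+y$ is also anisotropic). Then: (a) $\operatorname{CS}(x+y,w)\le \operatorname{CS}(x,w)+\operatorname{CS}(y,w)$ in $eR$. (b) If $q(x+y)\not\cong_\nu q(x)+q(y)$ and $\operatorname{CS}(x,w)+\operatorname{CS}(y,w)\neq 0$, then $\operatorname{CS}(x+y,w)<\operatorname{CS}(x,w)+\operatorname{CS}(y,w)$. (c) If $q(x+y)\cong_\nu q(x)+q(y)$ and at least one of the following holds: (c1) $e q(x)\cdot\operatorname{CS}(y,w)=eq(y)\cdot\operatorname{CS}(x,w)$; (c2) $\operatorname{CS}(x,w)=\operatorname{CS}(y,w)$; (c3) $q(x)\cong_\nu q(y)$; then $\operatorname{CS}(x+y,w)=\operatorname{CS}(x,w)+\operatorname{CS}(y,w)$.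
   Context: All semirings are commutative with $1$. A semiring $R$ is supertropical if $e:=1+1$ satisfies $e+e=e$ and, for all $x,y\in R$: if $ex\neq ey$ then $x+y\in\{x,y\}$, and if $ex=ey$ then $x+y=ey$. $eR$ is totally ordered by $u\le v\iff u+v=v$; write $x\le_\nu y$, $x\cong_\nu y$, $x<_\nu y$ for $ex\le ey$, $ex=ey$, $ex<ey$. $\mathcal G=eR\setminus\{0\}$; "$eR$ is a semifield" means every element of $\mathcal G$ is invertible in $eR$. A quadratic form on an $R$-module $V$ is a map $q:V\to R$ with $q(ax)=a^2q(x)$ such that some symmetric bilinear $b$ satisfies $q(x+y)=q(x)+q(y)+b(x,y)$; $(q,b)$ is a quadratic pair. A vector $x\in V$ is anisotropic if $x\ne0$ and $q(x)\neq 0$. For anisotropic $x,y$, the CS-ratio is $\operatorname{CS}(x,y):=\dfrac{e\,b(x,y)^2}{e\,q(x)q(y)}\in eR$ (quotient in the semifield $eR$). *)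

theory Defs
  imports Main
begin

definition ghost_e :: "'a::comm_semiring_1" where
  "ghost_e = 1 + 1"

definition supertropical :: "'a::comm_semiring_1 itself \<Rightarrow> bool" where
  "supertropical _ \<longleftrightarrow>
     (ghost_e::'a) + ghost_e = ghost_e \<and>
     (\<forall>x y::'a. (ghost_e * x \<noteq> ghost_e * y \<longrightarrow> x + y \<in> {x, y}) \<and>
                (ghost_e * x = ghost_e * y \<longrightarrow> x + y = ghost_e * y))"

definition ghost_ideal :: "'a::comm_semiring_1 set" where
  "ghost_ideal = range (\<lambda>a. ghost_e * a)"

definition tangible_group :: "'a::comm_semiring_1 set" where
  "tangible_group = ghost_ideal - {0}"

definition eR_semifield :: "'a::comm_semiring_1 itself \<Rightarrow> bool" where
  "eR_semifield _ \<longleftrightarrow>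
     (\<forall>g\<in>(tangible_group::'a set). \<exists>h\<in>ghost_ideal. g * h = ghost_e)"

definition e_inv :: "'a::comm_semiring_1 \<Rightarrow> 'a" where
  "e_inv g = (SOME h. h \<in> ghost_ideal \<and> g * h = ghost_e)"

definition eR_le :: "'a::comm_semiring_1 \<Rightarrow> 'a \<Rightarrow> bool" where
  "eR_le u v \<longleftrightarrow> u + v = v"

definition eR_less :: "'a::comm_semiring_1 \<Rightarrow> 'a \<Rightarrow> bool" where
  "eR_less u v \<longleftrightarrow> eR_le u v \<and> u \<noteq> v"

definition nu_equiv :: "'a::comm_semiring_1 \<Rightarrow> 'a \<Rightarrow> bool" where
  "nu_equiv x y \<longleftrightarrow> ghost_e * x = ghost_e * y"

definition semimodule :: "('a::comm_semiring_1 \<Rightarrow> 'v::comm_monoid_add \<Rightarrow> 'v) \<Rightarrow> bool" where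
  "semimodule sm \<longleftrightarrow>
     (\<forall>a x y. sm a (x + y) = sm a x + sm a y) \<and>
     (\<forall>a b x. sm (a + b) x = sm a x + sm b x) \<and>
     (\<forall>a b x. sm (a * b) x = sm a (sm b x)) \<and>
     (\<forall>x. sm 1 x = x) \<and>
     (\<forall>x. sm 0 x = 0) \<and>
     (\<forall>a. sm a 0 = 0)"

definition symmetric_bilinear ::
  "('a::comm_semiring_1 \<Rightarrow> 'v::comm_monoid_add \<Rightarrow> 'v) \<Rightarrow> ('v \<Rightarrow> 'v \<Rightarrow> 'a) \<Rightarrow> bool" where
  "symmetric_bilinear sm b \<longleftrightarrow>
     (\<forall>x y. b x y = b y x) \<and>
     (\<forall>x x' y. b (x + x') y = b x y + b x' y) \<and>
     (\<forall>a x y. b (sm a x) y = a * b x y)"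

definition quadratic_pair ::
  "('a::comm_semiring_1 \<Rightarrow> 'v::comm_monoid_add \<Rightarrow> 'v) \<Rightarrow> ('v \<Rightarrow> 'a) \<Rightarrow> ('v \<Rightarrow> 'v \<Rightarrow> 'a) \<Rightarrow> bool" where
  "quadratic_pair sm q b \<longleftrightarrow>
     (\<forall>a x. q (sm a x) = a\<^sup>2 * q x) \<and>
     symmetric_bilinear sm b \<and>
     (\<forall>x y. q (x + y) = q x + q y + b x y)"

definition anisotropic :: "('v::comm_monoid_add \<Rightarrow> 'a::comm_semiring_1) \<Rightarrow> 'v \<Rightarrow> bool" where
  "anisotropic q x \<longleftrightarrow> x \<noteq> 0 \<and> q x \<noteq> 0"

definition CS :: "('v \<Rightarrow> 'a::comm_semiring_1) \<Rightarrow> ('v \<Rightarrow> 'v \<Rightarrow> 'a) \<Rightarrow> 'v \<Rightarrow> 'v \<Rightarrow> 'a" where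
  "CS q b x y = ghost_e * (b x y)\<^sup>2 * e_inv (ghost_e * q x * q y)"

end

theory Submission
  imports Defs
begin

locale stl =
  fixes T :: "'a::comm_semiring_1 itself"
  assumes ST: "supertropical T" and SF: "eR_semifield T"
begin

definition gh :: "'a \<Rightarrow> bool" where "gh u \<longleftrightarrow> ghost_e * u = u"
abbreviation le :: "'a \<Rightarrow> 'a \<Rightarrow> bool" where "le \<equiv> eR_le"
abbreviation i :: "'a \<Rightarrow> 'a" where "i \<equiv> e_inv"

lemma ee_add: "ghost_e + ghost_e = (ghost_e::'a)"
  using ST unfolding supertropical_def by blast

lemma ax1: "ghost_e * x \<noteq> ghost_e * y \<Longrightarrow> x + y = x \<or> x + y = (y::'a)"
  using ST unfolding supertropical_def by blast

lemma ax2: "ghost_e * x = ghost_e * y \<Longrightarrow> x + y = ghost_e * (y::'a)"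
  using ST unfolding supertropical_def by blast

lemma ee: "ghost_e * ghost_e = (ghost_e::'a)"
proof -
  have "(ghost_e::'a) * (1 + 1) = ghost_e * 1 + ghost_e * 1" by (rule distrib_left)
  moreover have "(1 + 1::'a) = ghost_e" by (simp add: ghost_e_def)
  ultimately show ?thesis using ee_add by simp
qed

lemma gh_e: "gh (ghost_e * a)"
  unfolding gh_def by (simp add: mult.assoc[symmetric] ee)

lemma gh_mult: "gh u \<Longrightarrow> gh (u * v)"
  unfolding gh_def by (metis mult.assoc)

lemma gh_mult2: "gh v \<Longrightarrow> gh (u * v)"
  using gh_mult by (metis mult.commute)

lemma gh_add: "gh u \<Longrightarrow> gh v \<Longrightarrow> gh (u + v)"
  unfolding gh_def by (simp add: distrib_left)

lemma gh_zero: "gh 0" unfolding gh_def by simp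

lemma gh_idem: "gh u \<Longrightarrow> u + u = u"
  unfolding gh_def by (metis ghost_e_def distrib_right mult_1 mult.commute)

lemma gh_e_mult: "gh u \<Longrightarrow> u * ghost_e = u"
  unfolding gh_def by (simp add: mult.commute)

lemma e_zero: "ghost_e * a = 0 \<Longrightarrow> a = (0::'a)"
  using ax2[of a 0] by simp

lemma e_nz: "ghost_e \<noteq> (0::'a)"
  by (metis e_zero mult_1_right one_neq_zero)

lemma sum_cases: "gh u \<Longrightarrow> gh v \<Longrightarrow> u + v = u \<or> u + v = v"
  by (metis ax1 gh_def gh_idem)

lemma tot: "gh u \<Longrightarrow> gh v \<Longrightarrow> le u v \<or> le v u"
  unfolding eR_le_def by (metis sum_cases add.commute)

lemma refl: "gh u \<Longrightarrow> le u u" unfolding eR_le_def by (rule gh_idem)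

lemma antisym: "le u v \<Longrightarrow> le v u \<Longrightarrow> u = v"
  unfolding eR_le_def by (metis add.commute)

lemma trans: "le u v \<Longrightarrow> le v w \<Longrightarrow> le u w"
  unfolding eR_le_def by (metis add.assoc)

lemma mono: "le u v \<Longrightarrow> le (u * t) (v * t)"
  unfolding eR_le_def by (metis distrib_right)

lemma mono2: "le u v \<Longrightarrow> le (t * u) (t * v)"
  using mono by (metis mult.commute)

lemma le_add: "gh u \<Longrightarrow> le u (u + v)"
  unfolding eR_le_def by (metis add.assoc gh_idem)

lemma le_add2: "gh v \<Longrightarrow> le v (u + v)"
  using le_add by (metis add.commute)

lemma lub: "le u w \<Longrightarrow> le v w \<Longrightarrow> le (u + v) w"
  unfolding eR_le_def by (metis add.assoc)

lemma le_addI: "le u v \<Longrightarrow> le u (v + w)"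
  unfolding eR_le_def by (metis add.assoc)

lemma inv_ex: "gh u \<Longrightarrow> u \<noteq> 0 \<Longrightarrow> gh (i u) \<and> u * i u = ghost_e"
proof -
  assume g: "gh u" and nz: "u \<noteq> 0"
  have "u \<in> tangible_group" unfolding tangible_group_def ghost_ideal_def
    using g nz unfolding gh_def by (metis DiffI empty_iff insert_iff rangeI)
  then obtain h where "h \<in> ghost_ideal" "u * h = ghost_e"
    using SF unfolding eR_semifield_def by blast
  then have ex: "\<exists>h. h \<in> ghost_ideal \<and> u * h = ghost_e" by blast
  have "i u \<in> ghost_ideal \<and> u * i u = ghost_e"
    unfolding e_inv_def by (rule someI_ex[OF ex])
  then show ?thesis unfolding ghost_ideal_def using gh_e by auto
qed

lemma nz_mult: "gh u \<Longrightarrow> u \<noteq> 0 \<Longrightarrow> gh v \<Longrightarrow> v \<noteq> 0 \<Longrightarrow> u * v \<noteq> 0"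
proof
  assume a: "gh u" "u \<noteq> 0" "gh v" "v \<noteq> 0" "u * v = 0"
  have "i u * (u * v) = v" using inv_ex[OF a(1,2)] a(3)
    by (metis gh_e_mult mult.assoc mult.commute)
  then show False using a by simp
qed

lemma cancel_le: "gh u \<Longrightarrow> gh v \<Longrightarrow> gh t \<Longrightarrow> t \<noteq> 0 \<Longrightarrow> le (u * t) (v * t) \<Longrightarrow> le u v"
proof -
  assume a: "gh u" "gh v" "gh t" "t \<noteq> 0" "le (u * t) (v * t)"
  have "le (u * t * i t) (v * t * i t)" by (rule mono[OF a(5)])
  then show ?thesis using inv_ex[OF a(3,4)] a(1,2) by (simp add: mult.assoc gh_e_mult)
qed

lemma cancel_eq: "gh u \<Longrightarrow> gh v \<Longrightarrow> gh t \<Longrightarrow> t \<noteq> 0 \<Longrightarrow> u * t = v * t \<Longrightarrow> u = v"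
  by (metis cancel_le refl antisym gh_mult)

lemma cmp: "gh N \<Longrightarrow> gh N' \<Longrightarrow> gh D \<Longrightarrow> D \<noteq> 0 \<Longrightarrow> gh D' \<Longrightarrow> D' \<noteq> 0 \<Longrightarrow>
  le (N * i D) (N' * i D') \<longleftrightarrow> le (N * D') (N' * D)"
proof -
  assume a: "gh N" "gh N'" "gh D" "D \<noteq> 0" "gh D'" "D' \<noteq> 0"
  note iD = inv_ex[OF a(3,4)] and iD' = inv_ex[OF a(5,6)]
  have e1: "N * i D * (D * D') = N * D'"
    using iD a(1) by (metis gh_e_mult mult.assoc mult.commute)
  have e2: "N' * i D' * (D * D') = N' * D"
    using iD' a(2) by (metis gh_e_mult mult.assoc mult.commute)
  have e3: "N * D' * (i D * i D') = N * i D"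
    using iD' iD a(1) by (metis gh_e_mult gh_mult mult.assoc mult.commute)
  have e4: "N' * D * (i D * i D') = N' * i D'"
    using iD' iD a(2) by (metis gh_e_mult gh_mult mult.assoc mult.commute)
  show ?thesis using mono[of "N * i D" "N' * i D'" "D * D'"] mono[of "N * D'" "N' * D" "i D * i D'"]
    e1 e2 e3 e4 by auto
qed

lemma cmp_eq: "gh N \<Longrightarrow> gh N' \<Longrightarrow> gh D \<Longrightarrow> D \<noteq> 0 \<Longrightarrow> gh D' \<Longrightarrow> D' \<noteq> 0 \<Longrightarrow>
  (N * i D = N' * i D') \<longleftrightarrow> (N * D' = N' * D)"
  by (metis cmp antisym refl gh_mult gh_mult2 inv_ex)

lemma core:
  assumes g: "gh A" "gh C" "gh X" "gh Y" "gh W" "gh G"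
    and nz: "X \<noteq> 0" "Y \<noteq> 0" "W \<noteq> 0"
    and Z: "Z = X + Y + G" and CA: "le C A"
  shows "le ((A+C)*(A+C)*i(Z*W)) (A*A*i(X*W) + C*C*i(Y*W))
    \<and> (Z \<noteq> X + Y \<and> A*A*i(X*W) + C*C*i(Y*W) \<noteq> 0
         \<longrightarrow> eR_less ((A+C)*(A+C)*i(Z*W)) (A*A*i(X*W) + C*C*i(Y*W)))
    \<and> (Z = X + Y \<and> (X * (C*C*i(Y*W)) = Y * (A*A*i(X*W)) \<or> A*A*i(X*W) = C*C*i(Y*W) \<or> X = Y)
         \<longrightarrow> (A+C)*(A+C)*i(Z*W) = A*A*i(X*W) + C*C*i(Y*W))"
proof -
  have AC: "A + C = A" using CA unfolding eR_le_def by (simp add: add.commute)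
  have gZ: "gh Z" using g Z by (simp add: gh_add)
  have XZ: "le X Z" unfolding Z by (metis add.assoc le_add g(3))
  have nzZ: "Z \<noteq> 0" using XZ nz(1) unfolding eR_le_def by auto
  have gXW: "gh (X*W)" "X*W \<noteq> 0" using g nz by (auto simp: gh_mult nz_mult)
  have gYW: "gh (Y*W)" "Y*W \<noteq> 0" using g nz by (auto simp: gh_mult nz_mult)
  have gZW: "gh (Z*W)" "Z*W \<noteq> 0" using g nz gZ nzZ by (auto simp: gh_mult nz_mult)
  have gAA: "gh (A*A)" "gh (C*C)" using g by (auto simp: gh_mult)
  define P where "P = A*A*i(Z*W)"
  define S1 where "S1 = A*A*i(X*W)"
  define S2 where "S2 = C*C*i(Y*W)"
  have gP: "gh P" "gh S1" "gh S2" unfolding P_def S1_def S2_def using gAA by (auto simp: gh_mult)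
  have CCAA: "le (C*C) (A*A)" using mono[OF CA, of C] mono2[OF CA, of A]
    by (metis trans mult.commute)
  have PS1: "le P S1" unfolding P_def S1_def
    using cmp[OF gAA(1) gAA(1) gZW gXW] mono2[OF mono[OF XZ, of W], of "A*A"]
    by (simp add: mult.assoc)
  have A: "le P (S1 + S2)" using PS1 le_addI by blast
  have B: "Z \<noteq> X + Y \<and> S1 + S2 \<noteq> 0 \<longrightarrow> eR_less P (S1 + S2)"
  proof
    assume h: "Z \<noteq> X + Y \<and> S1 + S2 \<noteq> 0"
    have Anz: "A \<noteq> 0"
    proof
      assume "A = 0"
      then have "C = 0" using CA unfolding eR_le_def by simp
      then show False using h \<open>A = 0\<close> unfolding S1_def S2_def by simp
    qed
    have XnZ: "X \<noteq> Z"
    proof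
      assume "X = Z"
      have "le (X+Y) Z" using le_add[of "X+Y" G] g Z by (simp add: gh_add)
      moreover have "le Z (X+Y)" using \<open>X = Z\<close> le_add g by simp
      ultimately show False using h antisym by blast
    qed
    have "P \<noteq> S1 + S2"
    proof
      assume e: "P = S1 + S2"
      have "le S1 P" unfolding e using le_add gP by simp
      then have "P = S1" using PS1 antisym by blast
      then have "A*A*(X*W) = A*A*(Z*W)" unfolding P_def S1_def
        using cmp_eq[OF gAA(1) gAA(1) gZW gXW] by simp
      then have "X * (A*A*W) = Z * (A*A*W)" by (simp add: mult_ac)
      moreover have "gh (A*A*W)" "A*A*W \<noteq> 0" using g Anz nz
        by (auto simp: gh_mult nz_mult)
      ultimately have "X = Z" using cancel_eq g gZ by blast
      then show False using XnZ by simp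
    qed
    then show "eR_less P (S1 + S2)" using A unfolding eR_less_def by simp
  qed
  have Cc: "Z = X + Y \<and> (X * S2 = Y * S1 \<or> S1 = S2 \<or> X = Y) \<longrightarrow> P = S1 + S2"
  proof
    assume h: "Z = X + Y \<and> (X * S2 = Y * S1 \<or> S1 = S2 \<or> X = Y)"
    have ZX: "Z = X + Y" using h by simp
    have hyp: "X*X*C*C = Y*Y*A*A \<or> A*A*Y = C*C*X \<or> X = Y"
    proof -
      { assume c1: "X * S2 = Y * S1"
        have "X*C*C*i(Y*W) = Y*A*A*i(X*W)" using c1 unfolding S1_def S2_def by (simp add: mult.assoc)
        moreover have "gh (X*C*C)" "gh (Y*A*A)" using g by (auto simp: gh_mult)
        ultimately have "X*C*C*(X*W) = Y*A*A*(Y*W)" using cmp_eq gXW gYW by blast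
        then have "(X*X*C*C)*W = (Y*Y*A*A)*W" by (simp add: mult_ac)
        moreover have "gh (X*X*C*C)" "gh (Y*Y*A*A)" using g by (auto simp: gh_mult)
        ultimately have "X*X*C*C = Y*Y*A*A" using cancel_eq g(5) nz(3) by blast }
      moreover
      { assume c2: "S1 = S2"
        then have "A*A*(Y*W) = C*C*(X*W)" using cmp_eq gAA gXW gYW unfolding S1_def S2_def by blast
        then have "(A*A*Y)*W = (C*C*X)*W" by (simp add: mult_ac)
        moreover have "gh (A*A*Y)" "gh (C*C*X)" using g by (auto simp: gh_mult)
        ultimately have "A*A*Y = C*C*X" using cancel_eq g(5) nz(3) by blast }
      ultimately show ?thesis using h by blast
    qed
    have S1P_iff: "le (A*A*Z) (A*A*X) \<Longrightarrow> le S1 P" unfolding P_def S1_def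
      using cmp[OF gAA(1) gAA(1) gXW gZW] mono[of "A*A*Z" "A*A*X" W] by (simp add: mult.assoc)
    have S2P_iff: "le (C*C*Z) (A*A*Y) \<Longrightarrow> le S2 P" unfolding P_def S2_def
      using cmp[OF gAA(2) gAA(1) gYW gZW] mono[of "C*C*Z" "A*A*Y" W] by (simp add: mult.assoc)
    have gs: "gh (A*A*X)" "gh (A*A*Y)" "gh (C*C*X)" "gh (C*C*Y)" "gh (X*Y*A*A)" using g by (auto simp: gh_mult)
    have "le S1 P \<and> le S2 P"
    proof (cases "le Y X")
      case True
      then have ZX: "Z = X" using ZX unfolding eR_le_def by (simp add: add.commute)
      have "le (C*C*X) (A*A*Y)"
      proof -
        { assume c1: "X*X*C*C = Y*Y*A*A"
          have "le (Y*Y*A*A) (X*Y*A*A)" using mono[OF True, of "Y*A*A"] by (simp add: mult_ac)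
          then have "le ((C*C*X)*X) ((A*A*Y)*X)" using c1 by (simp add: mult_ac)
          then have ?thesis using cancel_le gs g(3) nz(1) by blast }
        moreover
        { assume "A*A*Y = C*C*X" then have ?thesis using refl gs by simp }
        moreover
        { assume "X = Y" then have ?thesis using mono[OF CCAA, of X] by simp }
        ultimately show ?thesis using hyp by blast
      qed
      then show ?thesis using S1P_iff S2P_iff ZX refl gs by simp
    next
      case False
      then have XY: "le X Y" using tot g by blast
      then have ZY: "Z = Y" using ZX unfolding eR_le_def by simp
      have "le (A*A*Y) (A*A*X)"
      proof -
        { assume c1: "X*X*C*C = Y*Y*A*A"
          have "le (X*X*C*C) (X*X*A*A)" using mono2[OF CCAA, of "X*X"] by (simp add: mult_ac)
          moreover have "le (X*X*A*A) (X*Y*A*A)" using mono[OF XY, of "X*A*A"] by (simp add: mult_ac)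
          ultimately have "le (Y*Y*A*A) (X*Y*A*A)" using c1 trans by metis
          then have "le ((A*A*Y)*Y) ((A*A*X)*Y)" by (simp add: mult_ac)
          then have ?thesis using cancel_le gs g(4) nz(2) by blast }
        moreover
        { assume "A*A*Y = C*C*X" then have ?thesis using mono2[OF XY, of "A*A"] mono[OF CCAA, of X]
            trans by (metis mult.assoc) }
        moreover
        { assume "X = Y" then have ?thesis using refl gs by simp }
        ultimately show ?thesis using hyp by blast
      qed
      then show ?thesis using S1P_iff S2P_iff ZY mono[OF CCAA, of Y] by simp
    qed
    then have "le (S1 + S2) P" using lub by blast
    then show "P = S1 + S2" using A antisym by blast
  qed
  show ?thesis using A B Cc AC unfolding P_def S1_def S2_def by simp
qed

lemma core_sym:
  assumes g: "gh A" "gh C" "gh X" "gh Y" "gh W" "gh G"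
    and nz: "X \<noteq> 0" "Y \<noteq> 0" "W \<noteq> 0"
    and Z: "Z = X + Y + G"
  shows "le ((A+C)*(A+C)*i(Z*W)) (A*A*i(X*W) + C*C*i(Y*W))
    \<and> (Z \<noteq> X + Y \<and> A*A*i(X*W) + C*C*i(Y*W) \<noteq> 0
         \<longrightarrow> eR_less ((A+C)*(A+C)*i(Z*W)) (A*A*i(X*W) + C*C*i(Y*W)))
    \<and> (Z = X + Y \<and> (X * (C*C*i(Y*W)) = Y * (A*A*i(X*W)) \<or> A*A*i(X*W) = C*C*i(Y*W) \<or> X = Y)
         \<longrightarrow> (A+C)*(A+C)*i(Z*W) = A*A*i(X*W) + C*C*i(Y*W))"
proof (cases "le C A")
  case True
  then show ?thesis using core[OF assms True] by blast
next
  case False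
  then have "le A C" using tot g by blast
  moreover have "Z = Y + X + G" using Z by (simp add: add_ac)
  ultimately have c: "le ((C+A)*(C+A)*i(Z*W)) (C*C*i(Y*W) + A*A*i(X*W))
    \<and> (Z \<noteq> Y + X \<and> C*C*i(Y*W) + A*A*i(X*W) \<noteq> 0
         \<longrightarrow> eR_less ((C+A)*(C+A)*i(Z*W)) (C*C*i(Y*W) + A*A*i(X*W)))
    \<and> (Z = Y + X \<and> (Y * (A*A*i(X*W)) = X * (C*C*i(Y*W)) \<or> C*C*i(Y*W) = A*A*i(X*W) \<or> Y = X)
         \<longrightarrow> (C+A)*(C+A)*i(Z*W) = C*C*i(Y*W) + A*A*i(X*W))"
    using core[of C A Y X W G Z] g nz by blast
  moreover have "C + A = A + C" "Y + X = X + Y" "C*C*i(Y*W) + A*A*i(X*W) = A*A*i(X*W) + C*C*i(Y*W)"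
    by (simp_all add: add.commute)
  ultimately show ?thesis by metis
qed

lemma ee2: "ghost_e * a * (ghost_e * c) = ghost_e * (a * (c::'a))"
  by (metis ee mult.assoc mult.commute)

lemma CS_eq: "CS q b x w = (ghost_e * b x w) * (ghost_e * b x w) * i ((ghost_e * q x) * (ghost_e * q w))"
  unfolding CS_def ee2 power2_eq_square by (simp add: mult.assoc)

end

theorem theorem2:
  fixes sm :: "'a::comm_semiring_1 \<Rightarrow> 'v::comm_monoid_add \<Rightarrow> 'v"
    and q :: "'v \<Rightarrow> 'a" and b :: "'v \<Rightarrow> 'v \<Rightarrow> 'a"
    and x y w :: 'v
  assumes "supertropical TYPE('a)"
    and "eR_semifield TYPE('a)"
    and "(tangible_group::'a set) \<noteq> {ghost_e}"
    and "semimodule sm"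
    and "quadratic_pair sm q b"
    and "anisotropic q x" and "anisotropic q y" and "anisotropic q w"
  shows "eR_le (CS q b (x + y) w) (CS q b x w + CS q b y w)
    \<and> (\<not> nu_equiv (q (x + y)) (q x + q y) \<and> CS q b x w + CS q b y w \<noteq> 0
         \<longrightarrow> eR_less (CS q b (x + y) w) (CS q b x w + CS q b y w))
    \<and> (nu_equiv (q (x + y)) (q x + q y) \<and>
         (ghost_e * q x * CS q b y w = ghost_e * q y * CS q b x w
          \<or> CS q b x w = CS q b y w
          \<or> nu_equiv (q x) (q y))
         \<longrightarrow> CS q b (x + y) w = CS q b x w + CS q b y w)"
proof -
  interpret stl "TYPE('a)" using assms(1,2) by unfold_locales
  have QP: "\<And>x y. q (x + y) = q x + q y + b x y" and bl: "\<And>x x' y. b (x + x') y = b x y + b x' y"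
    using assms(5) unfolding quadratic_pair_def symmetric_bilinear_def by auto
  define A where "A = ghost_e * b x w"
  define C where "C = ghost_e * b y w"
  define X where "X = ghost_e * q x"
  define Y where "Y = ghost_e * q y"
  define W where "W = ghost_e * q w"
  define G where "G = ghost_e * b x y"
  define Z where "Z = ghost_e * q (x + y)"
  have g: "gh A" "gh C" "gh X" "gh Y" "gh W" "gh G" "gh Z"
    unfolding A_def C_def X_def Y_def W_def G_def Z_def by (auto intro: gh_e)
  have nz: "X \<noteq> 0" "Y \<noteq> 0" "W \<noteq> 0" using assms(6-8) e_zero
    unfolding X_def Y_def W_def anisotropic_def by blast+
  have Zd: "Z = X + Y + G" unfolding Z_def X_def Y_def G_def QP by (simp add: distrib_left)
  have CSx: "CS q b x w = A*A*i(X*W)" unfolding A_def X_def W_def by (rule CS_eq)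
  have CSy: "CS q b y w = C*C*i(Y*W)" unfolding C_def Y_def W_def by (rule CS_eq)
  have CSxy: "CS q b (x+y) w = (A+C)*(A+C)*i(Z*W)" unfolding A_def C_def Z_def W_def
    using CS_eq[of q b "x+y" w] bl by (simp add: distrib_left)
  have nu1: "nu_equiv (q (x + y)) (q x + q y) \<longleftrightarrow> Z = X + Y"
    unfolding nu_equiv_def Z_def X_def Y_def by (simp add: distrib_left)
  have nu2: "nu_equiv (q x) (q y) \<longleftrightarrow> X = Y"
    unfolding nu_equiv_def X_def Y_def by simp
  have m1: "ghost_e * q x * (C*C*i(Y*W)) = X * (C*C*i(Y*W))" unfolding X_def by simp
  have m2: "ghost_e * q y * (A*A*i(X*W)) = Y * (A*A*i(X*W))" unfolding Y_def by simp
  show ?thesis unfolding CSx CSy CSxy nu1 nu2 m1 m2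
    using core_sym[OF g(1-6) nz Zd] by blast
qed

end
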